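(* Let $X$ be a real Banach space having Efremov's property $(\mathcal{E})$. Then $S_1(Y)=X^*$ for every norming linear subspace $Y\subset X^*$. Consequently, $X$ is fully Mazur.
   Context: For $A\subset X^*$, $S_1(A)$ denotes the set of all limits of $w^*$-convergent sequences contained in $A$. $X$ has Efremov's property $(\mathcal{E})$ if $S_1(C)=\overline{C}^{w^*}$ for every convex bounded set $C\subset X^*$. A linear subspace $Y\subset X^*$ is norming if $|||x|||=\sup\{x^*(x): x^*\in Y,\ \|x^*\|\le 1\}$ defines an equivalent norm on $X$. $X$ is fully Mazur if for every norming and norm-closed subspace $Y\subset X^*$, every $w^*$-sequentially continuous linear functional $f:Y\to\mathbb{R}$ is $w^*$-continuous. *)

theory Defs
  imports "HOL-Analysis.Analysis"
begin

text \<open>The dual X* of a real Banach space X is modelled as the type of bounded linear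
functionals 'a \<Rightarrow>L real.\<close>

definition weak_star_topology :: "('a::real_normed_vector \<Rightarrow>\<^sub>L real) topology" where
  "weak_star_topology =
     topology_generated_by {{f. blinfun_apply f x \<in> U} | x U. open U}"

definition S1 :: "('a::real_normed_vector \<Rightarrow>\<^sub>L real) set \<Rightarrow> ('a \<Rightarrow>\<^sub>L real) set" where
  "S1 A = {f. \<exists>s. (\<forall>n. s n \<in> A) \<and> limitin weak_star_topology s f sequentially}"

definition efremov_property :: "'a::real_normed_vector itself \<Rightarrow> bool" where
  "efremov_property _ \<longleftrightarrow>
     (\<forall>C :: ('a \<Rightarrow>\<^sub>L real) set. convex C \<and> bounded C \<longrightarrow>
        S1 C = weak_star_topology closure_of C)"

definition norming :: "('a::real_normed_vector \<Rightarrow>\<^sub>L real) set \<Rightarrow> bool" where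
  "norming Y \<longleftrightarrow> subspace Y \<and>
     (\<exists>c C. 0 < c \<and> 0 < C \<and>
        (\<forall>x::'a. c * norm x \<le> (SUP f\<in>{f\<in>Y. norm f \<le> 1}. blinfun_apply f x) \<and>
                 (SUP f\<in>{f\<in>Y. norm f \<le> 1}. blinfun_apply f x) \<le> C * norm x))"

definition linear_on :: "('a::real_vector) set \<Rightarrow> ('a \<Rightarrow> real) \<Rightarrow> bool" where
  "linear_on Y g \<longleftrightarrow>
     (\<forall>a\<in>Y. \<forall>b\<in>Y. g (a + b) = g a + g b) \<and> (\<forall>a\<in>Y. \<forall>r. g (r *\<^sub>R a) = r * g a)"

definition wstar_seq_continuous_on ::
  "('a::real_normed_vector \<Rightarrow>\<^sub>L real) set \<Rightarrow> (('a \<Rightarrow>\<^sub>L real) \<Rightarrow> real) \<Rightarrow> bool" where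
  "wstar_seq_continuous_on Y g \<longleftrightarrow>
     (\<forall>s y. (\<forall>n. s n \<in> Y) \<and> y \<in> Y \<and> limitin weak_star_topology s y sequentially
        \<longrightarrow> (\<lambda>n. g (s n)) \<longlonglongrightarrow> g y)"

definition fully_mazur :: "'a::real_normed_vector itself \<Rightarrow> bool" where
  "fully_mazur _ \<longleftrightarrow>
     (\<forall>(Y :: ('a \<Rightarrow>\<^sub>L real) set) g. norming Y \<and> closed Y \<and> linear_on Y g \<and>
        wstar_seq_continuous_on Y g \<longrightarrow>
        continuous_map (subtopology weak_star_topology Y) euclideanreal g)"

end

theory Submission
  imports Defs
begin

lemma wst_topspace [simp]: "topspace (weak_star_topology :: ('a::real_normed_vector \<Rightarrow>\<^sub>L real) topology) = UNIV"
proof -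
  have "UNIV \<in> {{f::'a \<Rightarrow>\<^sub>L real. blinfun_apply f x \<in> U} | x U. open U}" by auto
  then show ?thesis unfolding weak_star_topology_def topology_generated_by_topspace by blast
qed

lemma wst_open_eval: "open U \<Longrightarrow> openin weak_star_topology {f::'a::real_normed_vector \<Rightarrow>\<^sub>L real. blinfun_apply f x \<in> U}"
  unfolding weak_star_topology_def by (rule topology_generated_by_Basis) blast

lemma wst_nbhd:
  assumes "openin weak_star_topology T" "(f::'a::real_normed_vector \<Rightarrow>\<^sub>L real) \<in> T"
  shows "\<exists>F \<delta>. finite F \<and> \<delta> > 0 \<and> {h. \<forall>x\<in>F. \<bar>blinfun_apply h x - blinfun_apply f x\<bar> < \<delta>} \<subseteq> T"
proof -
  have "generate_topology_on {{f::'a \<Rightarrow>\<^sub>L real. blinfun_apply f x \<in> U} | x U. open U} T"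
    using assms(1) unfolding weak_star_topology_def by (rule openin_topology_generated_by)
  then show ?thesis using assms(2)
  proof (induction arbitrary: f rule: generate_topology_on.induct)
    case Empty then show ?case by simp
  next
    case (Int a b)
    from Int.IH(1)[of f] Int.prems obtain F1 d1 where 1: "finite F1" "d1 > 0"
      "{h. \<forall>x\<in>F1. \<bar>blinfun_apply h x - blinfun_apply f x\<bar> < d1} \<subseteq> a" by auto
    from Int.IH(2)[of f] Int.prems obtain F2 d2 where 2: "finite F2" "d2 > 0"
      "{h. \<forall>x\<in>F2. \<bar>blinfun_apply h x - blinfun_apply f x\<bar> < d2} \<subseteq> b" by auto
    show ?case
      apply (rule exI[of _ "F1 \<union> F2"], rule exI[of _ "min d1 d2"])
      using 1 2 by fastforce
  next
    case (UN K)
    then obtain k where "k \<in> K" "f \<in> k" by auto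
    with UN.IH[of k f] show ?case by blast
  next
    case (Basis s)
    then obtain x U where s: "s = {f. blinfun_apply f x \<in> U}" "open U" by auto
    with Basis.prems have "blinfun_apply f x \<in> U" by auto
    with s(2) obtain e where e: "e > 0" "ball (blinfun_apply f x) e \<subseteq> U"
      by (meson open_contains_ball)
    show ?case
      apply (rule exI[of _ "{x}"], rule exI[of _ e])
      using e by (auto simp: s dist_real_def subset_iff abs_minus_commute)
  qed
qed

lemma hb_step:
  fixes V :: "'v::real_vector set" and e h p :: "'v \<Rightarrow> real"
  assumes V: "subspace V" and e: "linear e"
  and hadd: "\<And>u v. u\<in>V \<Longrightarrow> v\<in>V \<Longrightarrow> h (u+v) = h u + h v"
  and hsc: "\<And>r u. u\<in>V \<Longrightarrow> h (r *\<^sub>R u) = r * h u"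
  and padd: "\<And>u v. u\<in>V \<Longrightarrow> v\<in>V \<Longrightarrow> p (u+v) \<le> p u + p v"
  and psc: "\<And>r u. u\<in>V \<Longrightarrow> r > 0 \<Longrightarrow> p (r *\<^sub>R u) = r * p u"
  and ker: "\<And>v. v\<in>V \<Longrightarrow> e v = 0 \<Longrightarrow> h v \<le> p v"
  shows "\<exists>c. \<forall>v\<in>V. h v - c * e v \<le> p v"
proof (cases "\<exists>w\<in>V. e w = 1")
  case False
  have "e v = 0" if "v \<in> V" for v
  proof (rule ccontr)
    assume "e v \<noteq> 0"
    then have "e ((1 / e v) *\<^sub>R v) = 1" using linear_scale[OF e] by simp
    moreover have "(1 / e v) *\<^sub>R v \<in> V" using V that by (simp add: subspace_scale)
    ultimately show False using False by blast
  qed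
  then show ?thesis using ker by (intro exI[of _ 0]) auto
next
  case True
  then obtain w where w: "w \<in> V" "e w = 1" by blast
  define A where "A = {h v - p v | v. v \<in> V \<and> e v = 1}"
  have key: "h v1 - p v1 \<le> h v2 + p (- v2)" if "v1 \<in> V" "v2 \<in> V" "e v1 = 1" "e v2 = 1" for v1 v2
  proof -
    have m: "- v2 \<in> V" using V that by (simp add: subspace_neg)
    have "e (v1 + - v2) = 0" using linear_add[OF e, of v1 "- v2"] linear_neg[OF e, of v2] that by simp
    moreover have "v1 + - v2 \<in> V" using V that m by (simp add: subspace_diff)
    ultimately have "h (v1 + - v2) \<le> p (v1 + - v2)" using ker by blast
    also have "\<dots> \<le> p v1 + p (- v2)" using padd that m by blast
    finally have "h (v1 + - v2) \<le> p v1 + p (- v2)" .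
    moreover have "h (v1 + - v2) = h v1 - h v2"
      using hadd[OF that(1) m] hsc[of v2 "-1"] that by simp
    ultimately show ?thesis by simp
  qed
  have ne: "A \<noteq> {}" using w unfolding A_def by blast
  have bdd: "bdd_above A" unfolding A_def bdd_above_def using key w by blast
  define c where "c = Sup A"
  have up: "h v - p v \<le> c" if "v \<in> V" "e v = 1" for v
    unfolding c_def by (rule cSup_upper[OF _ bdd]) (use that A_def in blast)
  have lo: "c \<le> h v + p (- v)" if "v \<in> V" "e v = 1" for v
    unfolding c_def by (rule cSup_least[OF ne]) (use that key A_def in blast)
  show ?thesis
  proof (intro exI[of _ c] ballI)
    fix v assume v: "v \<in> V"
    define t where "t = e v"
    define u where "u = (1 / t) *\<^sub>R v"
    have uV: "u \<in> V" unfolding u_def using V v by (simp add: subspace_scale)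
    consider "t > 0" | "t < 0" | "t = 0" by linarith
    then show "h v - c * e v \<le> p v"
    proof cases
      case 1
      have eu: "e u = 1" unfolding u_def t_def using 1 linear_scale[OF e] t_def by simp
      have "h u - p u \<le> c" using up[OF uV eu] .
      moreover have "h u = h v / t" unfolding u_def using hsc[OF v] by simp
      moreover have "p u = p v / t" unfolding u_def using psc[OF v, of "1/t"] 1 by simp
      ultimately have "(h v - p v) / t \<le> c" by (simp add: diff_divide_distrib)
      then show ?thesis using 1 unfolding t_def by (simp add: divide_le_eq mult.commute)
    next
      case 2
      have eu: "e u = 1" unfolding u_def t_def using 2 linear_scale[OF e] t_def by simp
      have "c \<le> h u + p (- u)" using lo[OF uV eu] .
      moreover have "h u = h v / t" unfolding u_def using hsc[OF v] by simp
      moreover have "p (- u) = - p v / t"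
      proof -
        have "- u = (- 1 / t) *\<^sub>R v" unfolding u_def by simp
        then show ?thesis using psc[OF v, of "-1/t"] 2 by simp
      qed
      ultimately have "c \<le> (h v - p v) / t" by (simp add: diff_divide_distrib)
      then show ?thesis using 2 unfolding t_def by (simp add: le_divide_eq mult.commute)
    next
      case 3
      then show ?thesis using ker[OF v] unfolding t_def by simp
    qed
  qed
qed

lemma hb_fin:
  fixes V :: "'v::real_vector set" and e :: "'i \<Rightarrow> 'v \<Rightarrow> real" and h p :: "'v \<Rightarrow> real"
  assumes F: "finite F" and V: "subspace V" and e: "\<And>i. linear (e i)"
  and hadd: "\<And>u v. u\<in>V \<Longrightarrow> v\<in>V \<Longrightarrow> h (u+v) = h u + h v"
  and hsc: "\<And>r u. u\<in>V \<Longrightarrow> h (r *\<^sub>R u) = r * h u"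
  and padd: "\<And>u v. u\<in>V \<Longrightarrow> v\<in>V \<Longrightarrow> p (u+v) \<le> p u + p v"
  and psc: "\<And>r u. u\<in>V \<Longrightarrow> r > 0 \<Longrightarrow> p (r *\<^sub>R u) = r * p u"
  and ker: "\<And>v. v\<in>V \<Longrightarrow> (\<forall>i\<in>F. e i v = 0) \<Longrightarrow> h v \<le> p v"
  shows "\<exists>a. \<forall>v\<in>V. h v - (\<Sum>i\<in>F. a i * e i v) \<le> p v"
  using F hadd hsc ker
proof (induction F arbitrary: h rule: finite_induct)
  case empty
  then show ?case by simp
next
  case (insert i0 F)
  define V' where "V' = {v\<in>V. \<forall>i\<in>F. e i v = 0}"
  have V'sub: "subspace V'"
    using V unfolding V'_def subspace_def
    by (auto simp: linear_add[OF e] linear_scale[OF e] linear_0[OF e])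
  have "\<exists>c. \<forall>v\<in>V'. h v - c * e i0 v \<le> p v"
    by (rule hb_step[OF V'sub e]) (auto simp: V'_def intro: insert.prems padd psc)
  then obtain c where c: "\<And>v. v\<in>V' \<Longrightarrow> h v - c * e i0 v \<le> p v" by blast
  define h' where "h' = (\<lambda>v. h v - c * e i0 v)"
  have "\<exists>a. \<forall>v\<in>V. h' v - (\<Sum>i\<in>F. a i * e i v) \<le> p v"
  proof (rule insert.IH)
    show "h' (u + v) = h' u + h' v" if "u \<in> V" "v \<in> V" for u v
      using insert.prems(1)[OF that] linear_add[OF e[of i0]] unfolding h'_def by (simp add: algebra_simps)
    show "h' (r *\<^sub>R u) = r * h' u" if "u \<in> V" for r u
      using insert.prems(2)[OF that] linear_scale[OF e[of i0]] unfolding h'_def by (simp add: algebra_simps)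
    show "h' v \<le> p v" if "v \<in> V" "\<forall>i\<in>F. e i v = 0" for v
      using c[of v] that unfolding h'_def V'_def by simp
  qed
  then obtain a where a: "\<And>v. v\<in>V \<Longrightarrow> h' v - (\<Sum>i\<in>F. a i * e i v) \<le> p v" by blast
  show ?case
  proof (intro exI[of _ "a(i0 := c)"] ballI)
    fix v assume v: "v \<in> V"
    have "(\<Sum>i\<in>insert i0 F. (a(i0 := c)) i * e i v) = c * e i0 v + (\<Sum>i\<in>F. a i * e i v)"
      using insert.hyps by (simp add: sum.insert) (intro sum.cong, auto)
    then show "h v - (\<Sum>i\<in>insert i0 F. (a(i0 := c)) i * e i v) \<le> p v"
      using a[OF v] unfolding h'_def by simp
  qed
qed

lemma norming_bound:
  assumes "norming (Y :: ('a::real_normed_vector \<Rightarrow>\<^sub>L real) set)"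
  shows "\<exists>c>0. \<forall>z b. (\<forall>y\<in>Y. norm y \<le> 1 \<longrightarrow> blinfun_apply y z \<le> b) \<longrightarrow> c * norm z \<le> b"
proof -
  from assms obtain c C where Y: "subspace Y" and c: "0 < c"
    and b: "\<And>x::'a. c * norm x \<le> (SUP f\<in>{f\<in>Y. norm f \<le> 1}. blinfun_apply f x)"
    unfolding norming_def by blast
  have "c * norm z \<le> b" if "\<forall>y\<in>Y. norm y \<le> 1 \<longrightarrow> blinfun_apply y z \<le> b" for z b
  proof -
    have "0 \<in> {f\<in>Y. norm f \<le> 1}" using Y subspace_0 by auto
    then have "(SUP f\<in>{f\<in>Y. norm f \<le> 1}. blinfun_apply f z) \<le> b"
      using that by (intro cSUP_least) auto
    then show ?thesis using b[of z] by linarith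
  qed
  then show ?thesis using c by blast
qed

lemma eval_sum: "blinfun_apply (y::'a::real_normed_vector \<Rightarrow>\<^sub>L real) (\<Sum>x\<in>F. a x *\<^sub>R x) = (\<Sum>x\<in>F. a x * blinfun_apply y x)"
  by (simp add: blinfun.sum_right blinfun.scaleR_right)

lemma part1:
  assumes E: "efremov_property TYPE('a::banach)" and N: "norming (Y :: ('a \<Rightarrow>\<^sub>L real) set)"
  shows "S1 Y = UNIV"
proof -
  have Y: "subspace Y" using N unfolding norming_def by blast
  obtain c where c: "c > 0" and cb: "\<And>z b. (\<forall>y\<in>Y. norm y \<le> 1 \<longrightarrow> blinfun_apply y z \<le> b) \<Longrightarrow> c * norm z \<le> b"
    using norming_bound[OF N] by blast
  have "f \<in> S1 Y" for f
  proof -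
    define R where "R = norm f / c + 1"
    have R: "R > 0" unfolding R_def using c by (simp add: add_nonneg_pos)
    define C where "C = Y \<inter> cball 0 R"
    have "convex C" unfolding C_def using Y by (intro convex_Int subspace_imp_convex convex_cball)
    moreover have "bounded C" unfolding C_def by (meson bounded_Int bounded_cball)
    ultimately have SC: "S1 C = weak_star_topology closure_of C"
      using E unfolding efremov_property_def by blast
    have "f \<in> weak_star_topology closure_of C"
    proof (rule ccontr)
      assume "f \<notin> weak_star_topology closure_of C"
      then obtain T where T: "f \<in> T" "openin weak_star_topology T" "\<And>y. y \<in> C \<Longrightarrow> y \<notin> T"
        unfolding in_closure_of by auto
      obtain F \<delta> where F: "finite F" "\<delta> > 0"
        and FT: "{h. \<forall>x\<in>F. \<bar>blinfun_apply h x - blinfun_apply f x\<bar> < \<delta>} \<subseteq> T"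
        using wst_nbhd[OF T(2,1)] by blast
      have noy: "False" if "y \<in> Y" "norm y \<le> R" "\<forall>x\<in>F. blinfun_apply y x = blinfun_apply f x" for y
      proof -
        have "y \<in> T" using FT that F(2) by auto
        moreover have "y \<in> C" unfolding C_def using that by auto
        ultimately show False using T(3) by blast
      qed
      define e where "e = (\<lambda>x (p :: ('a \<Rightarrow>\<^sub>L real) \<times> real). blinfun_apply (fst p) x - snd p * blinfun_apply f x)"
      have lin: "linear (e x)" for x
        unfolding e_def by (rule linearI) (auto simp: blinfun.add_left blinfun.scaleR_left algebra_simps)
      have "\<exists>a. \<forall>v\<in>Y \<times> UNIV. snd v * R - (\<Sum>i\<in>F. a i * e i v) \<le> norm (fst v)"
      proof (rule hb_fin[OF F(1) subspace_Times[OF Y subspace_UNIV] lin, where h="\<lambda>v. snd v * R" and p="\<lambda>v. norm (fst v)"])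
        show "snd (u + v) * R = snd u * R + snd v * R" for u v :: "('a \<Rightarrow>\<^sub>L real) \<times> real"
          by (simp add: algebra_simps)
        show "snd (r *\<^sub>R u) * R = r * (snd u * R)" for r and u :: "('a \<Rightarrow>\<^sub>L real) \<times> real"
          by simp
        show "norm (fst (u + v)) \<le> norm (fst u) + norm (fst v)" for u v :: "('a \<Rightarrow>\<^sub>L real) \<times> real"
          by (simp add: norm_triangle_ineq)
        show "norm (fst (r *\<^sub>R u)) = r * norm (fst u)" if "r > 0" for r and u :: "('a \<Rightarrow>\<^sub>L real) \<times> real"
          using that by simp
        show "snd v * R \<le> norm (fst v)" if v: "v \<in> Y \<times> UNIV" "\<forall>i\<in>F. e i v = 0" for v
        proof (cases "snd v > 0")
          case False
          then have "snd v * R \<le> 0" using R by (simp add: mult_nonpos_nonneg)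
          then show ?thesis using norm_ge_zero[of "fst v"] by linarith
        next
          case True
          define y where "y = (1 / snd v) *\<^sub>R fst v"
          have "y \<in> Y" unfolding y_def using v Y by (auto simp: subspace_scale)
          moreover have "\<forall>x\<in>F. blinfun_apply y x = blinfun_apply f x"
            using v True unfolding y_def e_def by (auto simp: blinfun.scaleR_left)
          ultimately have "\<not> norm y \<le> R" using noy by blast
          then have "R < norm (fst v) / snd v" unfolding y_def using True by simp
          then show ?thesis using True by (simp add: pos_less_divide_eq mult.commute)
        qed
      qed
      then obtain a where a: "\<And>v. v \<in> Y \<times> UNIV \<Longrightarrow> snd v * R - (\<Sum>i\<in>F. a i * e i v) \<le> norm (fst v)"
        by blast
      define z where "z = (\<Sum>x\<in>F. a x *\<^sub>R x)"
      have sumz: "(\<Sum>i\<in>F. a i * e i (y, t)) = blinfun_apply y z - t * blinfun_apply f z" for y t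
        unfolding e_def z_def eval_sum by (simp add: right_diff_distrib sum_subtractf sum_distrib_left algebra_simps)
      have "blinfun_apply y z \<le> 1" if "y \<in> Y" "norm y \<le> 1" for y
      proof -
        have "- y \<in> Y" using Y that by (simp add: subspace_neg)
        from a[of "(- y, 0)"] this sumz[of "- y" 0] have "blinfun_apply y z \<le> norm y"
          by (simp add: blinfun.minus_left)
        then show ?thesis using that by linarith
      qed
      then have "c * norm z \<le> 1" using cb by blast
      have Y0: "(0, 1) \<in> Y \<times> (UNIV :: real set)" using subspace_0[OF Y] by blast
      have h1: "snd (0::'a \<Rightarrow>\<^sub>L real, 1::real) * R - (\<Sum>i\<in>F. a i * e i (0, 1)) \<le> norm (fst (0::'a \<Rightarrow>\<^sub>L real, 1::real))" by (rule a[OF Y0])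
      have h2: "(\<Sum>i\<in>F. a i * e i (0, 1)) = - blinfun_apply f z" using sumz[of 0 1] by simp
      have "R + blinfun_apply f z \<le> 0" using h1 unfolding h2 by simp
      then have "R \<le> - blinfun_apply f z" by linarith
      also have "\<dots> \<le> norm f * norm z" using norm_blinfun[of f z] by simp
      also have "\<dots> \<le> norm f / c"
      proof -
        have "norm z \<le> 1 / c" using \<open>c * norm z \<le> 1\<close> c by (simp add: le_divide_eq mult.commute)
        then have "norm f * norm z \<le> norm f * (1 / c)" by (rule mult_left_mono) simp
        then show ?thesis by simp
      qed
      finally show False unfolding R_def by simp
    qed
    then have "f \<in> S1 C" using SC by simp
    then show ?thesis unfolding S1_def C_def by blast
  qed
  then show ?thesis by blast
qed

lemma part2:
  assumes E: "efremov_property TYPE('a::banach)" and N: "norming (Y :: ('a \<Rightarrow>\<^sub>L real) set)"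
    and L: "linear_on Y g" and SC: "wstar_seq_continuous_on Y g"
  shows "continuous_map (subtopology weak_star_topology Y) euclideanreal g"
proof -
  have Y: "subspace Y" using N unfolding norming_def by blast
  obtain c where c: "c > 0" and cb: "\<And>z b. (\<forall>y\<in>Y. norm y \<le> 1 \<longrightarrow> blinfun_apply y z \<le> b) \<Longrightarrow> c * norm z \<le> b"
    using norming_bound[OF N] by blast
  have gadd: "\<And>u v. u\<in>Y \<Longrightarrow> v\<in>Y \<Longrightarrow> g (u+v) = g u + g v"
    and gsc: "\<And>r u. u\<in>Y \<Longrightarrow> g (r *\<^sub>R u) = r * g u" using L unfolding linear_on_def by auto
  have Y0: "0 \<in> Y" using subspace_0[OF Y] .
  have g0: "g 0 = 0" using gsc[OF Y0, of 0] by simp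
  have gneg: "g (- u) = - g u" if "u \<in> Y" for u using gsc[OF that, of "-1"] by simp
  have step_a: "\<exists>F. finite F \<and> (\<forall>y\<in>Y. norm y \<le> 1 \<longrightarrow> (\<forall>x\<in>F. blinfun_apply y x = 0) \<longrightarrow> g y < \<epsilon>)"
    if eps: "\<epsilon> > 0" for \<epsilon>
  proof -
    define C where "C = {y\<in>Y. norm y \<le> 1 \<and> \<epsilon> \<le> g y}"
    have "convex C"
    proof (rule convexI)
      fix u v and a b :: real assume uv: "u \<in> C" "v \<in> C" and ab0: "0 \<le> a" "0 \<le> b" "a + b = 1"
      have ab: "0 \<le> a \<and> 0 \<le> b \<and> a + b = 1" using ab0 by simp
      have mem: "a *\<^sub>R u + b *\<^sub>R v \<in> Y" using uv Y unfolding C_def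
        by (simp add: subspace_add subspace_scale)
      have "norm (a *\<^sub>R u + b *\<^sub>R v) \<le> a * norm u + b * norm v"
        using norm_triangle_ineq[of "a *\<^sub>R u" "b *\<^sub>R v"] ab by simp
      also have "\<dots> \<le> a * 1 + b * 1" using uv ab unfolding C_def by (intro add_mono mult_left_mono) auto
      finally have n: "norm (a *\<^sub>R u + b *\<^sub>R v) \<le> 1" using ab by simp
      have "g (a *\<^sub>R u + b *\<^sub>R v) = a * g u + b * g v"
        using uv Y unfolding C_def by (simp add: gadd gsc subspace_scale)
      moreover have "a * \<epsilon> + b * \<epsilon> \<le> a * g u + b * g v"
        using uv ab unfolding C_def by (intro add_mono mult_left_mono) auto
      ultimately have "\<epsilon> \<le> g (a *\<^sub>R u + b *\<^sub>R v)" using ab by (simp add: distrib_right[symmetric])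
      then show "a *\<^sub>R u + b *\<^sub>R v \<in> C" using mem n unfolding C_def by simp
    qed
    moreover have "bounded C" unfolding C_def
      by (rule bounded_subset[OF bounded_cball[of 0 1]]) auto
    ultimately have SCC: "S1 C = weak_star_topology closure_of C"
      using E unfolding efremov_property_def by blast
    have "0 \<notin> S1 C"
    proof
      assume "0 \<in> S1 C"
      then obtain s where s: "\<And>n. s n \<in> C" "limitin weak_star_topology s 0 sequentially"
        unfolding S1_def by blast
      have "(\<lambda>n. g (s n)) \<longlonglongrightarrow> g 0"
        using SC s Y0 unfolding wstar_seq_continuous_on_def C_def by blast
      then have "(\<lambda>n. g (s n)) \<longlonglongrightarrow> 0" using g0 by simp
      moreover have "\<exists>N. \<forall>n\<ge>N. \<epsilon> \<le> g (s n)" using s(1) unfolding C_def by blast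
      ultimately have "\<epsilon> \<le> 0" by (rule LIMSEQ_le_const)
      then show False using eps by simp
    qed
    then have "0 \<notin> weak_star_topology closure_of C" using SCC by simp
    then obtain T where T: "0 \<in> T" "openin weak_star_topology T" "\<And>y. y \<in> C \<Longrightarrow> y \<notin> T"
      unfolding in_closure_of by auto
    obtain F \<delta> where F: "finite F" "\<delta> > 0"
      and FT: "{h. \<forall>x\<in>F. \<bar>blinfun_apply h x - blinfun_apply 0 x\<bar> < \<delta>} \<subseteq> T"
      using wst_nbhd[OF T(2,1)] by blast
    have "g y < \<epsilon>" if "y \<in> Y" "norm y \<le> 1" "\<forall>x\<in>F. blinfun_apply y x = 0" for y
    proof -
      have "y \<in> T" using FT that F(2) by auto
      then have "y \<notin> C" using T(3) by blast
      then show ?thesis using that unfolding C_def by auto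
    qed
    then show ?thesis using F(1) by blast
  qed
  have step_b: "\<exists>z. \<forall>y\<in>Y. \<bar>g y - blinfun_apply y z\<bar> \<le> \<epsilon> * norm y" if eps: "\<epsilon> > 0" for \<epsilon>
  proof -
    obtain F where F: "finite F"
      and FY: "\<And>y. y\<in>Y \<Longrightarrow> norm y \<le> 1 \<Longrightarrow> (\<forall>x\<in>F. blinfun_apply y x = 0) \<Longrightarrow> g y < \<epsilon>"
      using step_a[OF eps] by blast
    have "\<exists>a. \<forall>v\<in>Y. g v - (\<Sum>i\<in>F. a i * blinfun_apply v i) \<le> \<epsilon> * norm v"
    proof (rule hb_fin[OF F Y])
      show "linear (\<lambda>v::'a \<Rightarrow>\<^sub>L real. blinfun_apply v i)" for i
        using blinfun.bounded_linear_left bounded_linear.linear by blast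
      show "g (u + v) = g u + g v" if "u \<in> Y" "v \<in> Y" for u v using gadd that .
      show "g (r *\<^sub>R u) = r * g u" if "u \<in> Y" for r u using gsc that .
      show "\<epsilon> * norm (u + v) \<le> \<epsilon> * norm u + \<epsilon> * norm v" for u v :: "'a \<Rightarrow>\<^sub>L real"
        using eps norm_triangle_ineq[of u v] by (simp add: distrib_left[symmetric])
      show "\<epsilon> * norm (r *\<^sub>R u) = r * (\<epsilon> * norm u)" if "r > 0" for r and u :: "'a \<Rightarrow>\<^sub>L real"
        using that by simp
      show "g v \<le> \<epsilon> * norm v" if v: "v \<in> Y" "\<forall>i\<in>F. blinfun_apply v i = 0" for v
      proof (cases "v = 0")
        case True then show ?thesis using g0 by simp
      next
        case False
        then have nv: "norm v > 0" by simp
        define u where "u = (1 / norm v) *\<^sub>R v"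
        have uY: "u \<in> Y" unfolding u_def using v Y by (simp add: subspace_scale)
        have "norm u \<le> 1" unfolding u_def using nv by simp
        moreover have "\<forall>x\<in>F. blinfun_apply u x = 0" unfolding u_def using v by (simp add: blinfun.scaleR_left)
        ultimately have "g u < \<epsilon>" using FY uY by blast
        moreover have "g u = g v / norm v" unfolding u_def using gsc[OF v(1)] by simp
        ultimately show ?thesis using nv by (simp add: divide_less_eq less_imp_le)
      qed
    qed
    then obtain a where a: "\<And>v. v\<in>Y \<Longrightarrow> g v - (\<Sum>i\<in>F. a i * blinfun_apply v i) \<le> \<epsilon> * norm v"
      by blast
    define z where "z = (\<Sum>x\<in>F. a x *\<^sub>R x)"
    have a': "g v - blinfun_apply v z \<le> \<epsilon> * norm v" if "v \<in> Y" for v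
      using a[OF that] unfolding z_def eval_sum .
    have "\<bar>g y - blinfun_apply y z\<bar> \<le> \<epsilon> * norm y" if "y \<in> Y" for y
    proof -
      have my: "- y \<in> Y" using Y that by (simp add: subspace_neg)
      have "g (- y) - blinfun_apply (- y) z \<le> \<epsilon> * norm (- y)" using a'[OF my] .
      then have "- g y + blinfun_apply y z \<le> \<epsilon> * norm y"
        using gneg[OF that] by (simp add: blinfun.minus_left)
      then show ?thesis using a'[OF that] by linarith
    qed
    then show ?thesis by blast
  qed
  define ep where "ep = (\<lambda>n::nat. inverse (real (Suc n)))"
  have ep_pos: "ep n > 0" for n unfolding ep_def by simp
  have "\<forall>n. \<exists>z. \<forall>y\<in>Y. \<bar>g y - blinfun_apply y z\<bar> \<le> ep n * norm y"
    using step_b ep_pos by blast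
  then obtain zs where zs0: "\<forall>n. \<forall>y\<in>Y. \<bar>g y - blinfun_apply y (zs n)\<bar> \<le> ep n * norm y"
    by (auto dest: choice)
  have zs: "\<And>n y. y \<in> Y \<Longrightarrow> \<bar>g y - blinfun_apply y (zs n)\<bar> \<le> ep n * norm y"
    using zs0 by blast
  have dz: "c * norm (zs n - zs m) \<le> ep n + ep m" for n m
  proof (rule cb, intro ballI impI)
    fix y assume y: "y \<in> Y" "norm y \<le> 1"
    have "blinfun_apply y (zs n - zs m) = (blinfun_apply y (zs n) - g y) + (g y - blinfun_apply y (zs m))"
      by (simp add: blinfun.diff_right)
    also have "\<dots> \<le> ep n * norm y + ep m * norm y"
      using zs[OF y(1), of n] zs[OF y(1), of m] by linarith
    also have "\<dots> \<le> ep n + ep m"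
      using y(2) ep_pos[of n] ep_pos[of m] by (intro add_mono) (simp_all add: mult_left_le)
    finally show "blinfun_apply y (zs n - zs m) \<le> ep n + ep m" .
  qed
  have "Cauchy zs"
  proof (rule metric_CauchyI)
    fix e :: real assume e: "e > 0"
    obtain N where N: "inverse (real (Suc N)) < c * e / 2"
      using reals_Archimedean[of "c * e / 2"] c e by auto
    have "dist (zs m) (zs n) < e" if "m \<ge> N" "n \<ge> N" for m n
    proof -
      have "ep m \<le> inverse (real (Suc N))" "ep n \<le> inverse (real (Suc N))"
        unfolding ep_def using that by (auto intro!: le_imp_inverse_le)
      then have "c * norm (zs m - zs n) < c * e" using dz[of m n] N by linarith
      then show ?thesis using c by (simp add: dist_norm)
    qed
    then show "\<exists>M. \<forall>m\<ge>M. \<forall>n\<ge>M. dist (zs m) (zs n) < e" by blast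
  qed
  then obtain z where z: "zs \<longlonglongrightarrow> z" using Cauchy_convergent_iff convergent_def by blast
  have gz: "g y = blinfun_apply y z" if y: "y \<in> Y" for y
  proof -
    have ep0: "ep \<longlonglongrightarrow> 0" unfolding ep_def by (rule LIMSEQ_inverse_real_of_nat)
    have t1: "(\<lambda>n. blinfun_apply y (zs n)) \<longlonglongrightarrow> blinfun_apply y z"
      by (rule blinfun.tendsto[OF tendsto_const z])
    have t2: "(\<lambda>n. ep n * norm y + \<bar>blinfun_apply y (zs n) - blinfun_apply y z\<bar>) \<longlonglongrightarrow> 0 * norm y + \<bar>blinfun_apply y z - blinfun_apply y z\<bar>"
      by (intro tendsto_intros ep0 t1)
    have "\<bar>g y - blinfun_apply y z\<bar> \<le> 0"
    proof (rule LIMSEQ_le_const)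
      show "(\<lambda>n. ep n * norm y + \<bar>blinfun_apply y (zs n) - blinfun_apply y z\<bar>) \<longlonglongrightarrow> 0" using t2 by simp
      show "\<exists>N. \<forall>n\<ge>N. \<bar>g y - blinfun_apply y z\<bar> \<le> ep n * norm y + \<bar>blinfun_apply y (zs n) - blinfun_apply y z\<bar>"
      proof (intro exI[of _ 0] allI impI)
        fix n :: nat
        show "\<bar>g y - blinfun_apply y z\<bar> \<le> ep n * norm y + \<bar>blinfun_apply y (zs n) - blinfun_apply y z\<bar>"
          using zs[OF y, of n] by arith
      qed
    qed
    then show ?thesis by simp
  qed
  have cont: "continuous_map weak_star_topology euclideanreal (\<lambda>f. blinfun_apply f z)"
    unfolding continuous_map_def using wst_open_eval by auto
  show ?thesis
    by (rule continuous_map_eq[OF continuous_map_from_subtopology[OF cont]]) (simp add: gz)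
qed

theorem corollary3p4:
  assumes "efremov_property TYPE('a::banach)"
  shows "(\<forall>Y :: ('a \<Rightarrow>\<^sub>L real) set. norming Y \<longrightarrow> S1 Y = UNIV)
         \<and> fully_mazur TYPE('a)"
  using part1[OF assms] part2[OF assms] unfolding fully_mazur_def by blast

end
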